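(* Every $y=(y^1,y^2,y^3)\in\mathbb T^3$ such that $y^i\in\{0,\tfrac12\}$ (mod 1) for some $i\in\{1,2,3\}$ belongs to the no-collision region $\mathfrak I$.
   Context: $\mathbb{T}=\mathbb R/\mathbb Z$, $\mathbb{T}^3=\mathbb{R}^3/\mathbb{Z}^3$; $\omega(k)=\omega_0+\sum_{j=1}^3 2(1-\cos(2\pi k^j))$ with fixed $2<\omega_0<3$. Two wave vectors $x,y\in\mathbb{T}^3$ are connected by one collision if $\omega(y)=\omega(x)+\omega(y-x)$, or $\omega(x)=\omega(y)+\omega(x-y)$, or $\omega(x+y)=\omega(x)+\omega(y)$. The no-collision region $\mathfrak I$ is the set of $x\in\mathbb T^3$ such that no $y\in\mathbb T^3$ is connected to $x$ by one collision. *)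

theory Defs
  imports "HOL-Analysis.Analysis"
begin

text \<open>Points of the torus T^3 = R^3/Z^3 are represented by real representatives
  in real^3; all notions below are 1-periodic in every coordinate, so they are
  well defined on the torus.\<close>

definition omega :: "real \<Rightarrow> real^3 \<Rightarrow> real" where
  "omega w0 k = w0 + (\<Sum>j\<in>UNIV. 2 * (1 - cos (2 * pi * k $ j)))"

definition collision_connected :: "real \<Rightarrow> real^3 \<Rightarrow> real^3 \<Rightarrow> bool" where
  "collision_connected w0 x y \<longleftrightarrow>
     omega w0 y = omega w0 x + omega w0 (y - x) \<or>
     omega w0 x = omega w0 y + omega w0 (x - y) \<or>
     omega w0 (x + y) = omega w0 x + omega w0 y"

definition no_collision_region :: "real \<Rightarrow> (real^3) set" where
  "no_collision_region w0 = {x. \<not> (\<exists>y. collision_connected w0 x y)}"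

end

theory Submission
  imports Defs
begin

definition ff :: "real \<Rightarrow> real" where "ff t = 2 * (1 - cos (2 * pi * t))"

lemma omega_ff: "omega w0 k = w0 + (\<Sum>j\<in>UNIV. ff (k $ j))"
  by (simp add: omega_def ff_def)

lemma G_le1: fixes a b :: real shows "ff (a + b) - ff a - ff b \<le> 1"
proof -
  define A where "A = 2*pi*a"
  define B where "B = 2*pi*b"
  have e: "2*pi*(a+b) = A + B" by (simp add: A_def B_def distrib_left)
  have sq: "0 \<le> (cos A + cos B - 1)^2 + (sin A - sin B)^2" by simp
  have "(cos A + cos B - 1)^2 + (sin A - sin B)^2 = 3 + 2*(cos A*cos B - sin A * sin B) - 2*cos A - 2*cos B"
  proof -
    have "(cos A + cos B - 1)^2 + (sin A - sin B)^2 = (cos A * cos A + sin A * sin A) + (cos B * cos B + sin B * sin B) + 1 + 2*(cos A*cos B - sin A * sin B) - 2*cos A - 2*cos B"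
      unfolding power2_eq_square by algebra
    moreover have "cos A * cos A + sin A * sin A = 1" "cos B * cos B + sin B * sin B = 1"
      using sin_cos_squared_add[of A] sin_cos_squared_add[of B] by (simp_all add: power2_eq_square)
    ultimately show ?thesis by linarith
  qed
  then show ?thesis using sq unfolding ff_def e A_def[symmetric] B_def[symmetric] cos_add
    by (smt (verit))
qed

lemma special_y:
  fixes y :: real
  assumes "\<exists>k::int. y = of_int k \<or> y = of_int k + 1/2"
  shows "sin (2*pi*y) = 0 \<and> (cos (2*pi*y) = 1 \<or> cos (2*pi*y) = -1)"
proof -
  obtain k :: int where k: "y = of_int k \<or> y = of_int k + 1/2" using assms by blast
  have s0: "sin (2*pi*(of_int k::real)) = 0" "cos (2*pi*(of_int k::real)) = 1"
    by (metis mult.commute mult.left_commute sin_int_2pin cos_int_2pin)+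
  show ?thesis
  proof (cases "y = of_int k")
    case True then show ?thesis using s0 by simp
  next
    case False
    then have "y = of_int k + 1/2" using k by blast
    then have "2*pi*y = 2*pi * of_int k + pi" by (simp add: algebra_simps)
    then show ?thesis using s0 by (simp add: sin_add cos_add)
  qed
qed

lemma special_G:
  fixes X Y :: real
  assumes "sin Y = 0" "cos Y = 1 \<or> cos Y = -1"
  shows "2*(1 - cos (X+Y)) - 2*(1 - cos X) - 2*(1 - cos Y) \<le> 0"
    and "2*(1 - cos Y) - 2*(1 - cos X) - 2*(1 - cos (Y - X)) \<le> 0"
    and "2*(1 - cos X) - 2*(1 - cos Y) - 2*(1 - cos (X - Y)) \<le> 0"
  using assms cos_le_one[of X] cos_ge_minus_one[of X]
  by (auto simp: cos_add cos_diff; linarith)+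

lemma sum_le2:
  fixes g :: "3 \<Rightarrow> real"
  assumes "\<And>j. g j \<le> 1" "g i \<le> 0"
  shows "sum g UNIV \<le> 2"
proof -
  have "sum g UNIV = g i + sum g (UNIV - {i})"
    by (simp add: sum.remove)
  moreover have "sum g (UNIV - {i}) \<le> of_nat (card (UNIV - {i})) * 1"
    by (rule sum_bounded_above) (use assms in auto)
  moreover have "card (UNIV - {i::3}) = 2" by (simp add: card_Diff_singleton)
  ultimately show ?thesis using assms(2) by simp
qed

theorem mainTheorem9:
  fixes w0 :: real and y :: "real^3"
  assumes "2 < w0" and "w0 < 3"
    and "\<exists>i. \<exists>k::int. y $ i = of_int k \<or> y $ i = of_int k + 1/2"
  shows "y \<in> no_collision_region w0"
proof -
  obtain i where i: "\<exists>k::int. y $ i = of_int k \<or> y $ i = of_int k + 1/2" using assms(3) by blast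
  have sy: "sin (2*pi*(y$i)) = 0 \<and> (cos (2*pi*(y$i)) = 1 \<or> cos (2*pi*(y$i)) = -1)"
    using special_y[OF i] .
  have "\<not> collision_connected w0 y x" for x
  proof
    assume c: "collision_connected w0 y x"
    let ?X = "2*pi*(x$i)" and ?Y = "2*pi*(y$i)"
    have dA: "2*pi*(x$i + y$i) = ?X + ?Y" "2*pi*(x$i - y$i) = ?X - ?Y" "2*pi*(y$i - x$i) = ?Y - ?X"
      by (simp_all add: algebra_simps)
    from c consider
        (a) "omega w0 x = omega w0 y + omega w0 (x - y)"
      | (b) "omega w0 y = omega w0 x + omega w0 (y - x)"
      | (d) "omega w0 (y + x) = omega w0 y + omega w0 x"
      unfolding collision_connected_def by blast
    then show False
    proof cases
      case a
      let ?g = "\<lambda>j. ff ((x - y) $ j + y $ j) - ff (y $ j) - ff ((x-y) $ j)"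
      have "sum ?g UNIV = w0" using a
        by (simp add: omega_ff sum_subtractf)
      moreover have "sum ?g UNIV \<le> 2"
      proof (rule sum_le2)
        show "?g j \<le> 1" for j using G_le1[of "(x-y)$j" "y$j"] G_le1[of "x$j" "(y-x)$j"] G_le1[of "x$j" "y$j"] by linarith
        show "?g i \<le> 0" using special_G(3)[of ?Y ?X] sy dA by (simp add: ff_def)
      qed
      ultimately show False using assms by simp
    next
      case b
      let ?g = "\<lambda>j. ff (x $ j + (y - x) $ j) - ff (x $ j) - ff ((y-x) $ j)"
      have "sum ?g UNIV = w0" using b
        by (simp add: omega_ff sum_subtractf)
      moreover have "sum ?g UNIV \<le> 2"
      proof (rule sum_le2)
        show "?g j \<le> 1" for j using G_le1[of "(x-y)$j" "y$j"] G_le1[of "x$j" "(y-x)$j"] G_le1[of "x$j" "y$j"] by linarith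
        show "?g i \<le> 0" using special_G(2)[of ?Y ?X] sy dA by (simp add: ff_def)
      qed
      ultimately show False using assms by simp
    next
      case d
      let ?g = "\<lambda>j. ff (x $ j + y $ j) - ff (x $ j) - ff (y $ j)"
      have "sum ?g UNIV = w0" using d
        by (simp add: omega_ff sum_subtractf add.commute)
      moreover have "sum ?g UNIV \<le> 2"
      proof (rule sum_le2)
        show "?g j \<le> 1" for j using G_le1[of "(x-y)$j" "y$j"] G_le1[of "x$j" "(y-x)$j"] G_le1[of "x$j" "y$j"] by linarith
        show "?g i \<le> 0" using special_G(1)[of ?Y ?X] sy dA by (simp add: ff_def)
      qed
      ultimately show False using assms by simp
    qed
  qed
  then show ?thesis by (simp add: no_collision_region_def)
qed

end
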